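(* In the setting of the context, assume the dispersal covariance is isotropic, $C=\sigma^2I$, that the population is stationary, $\varphi_t\equiv\varphi$, and that $\vec b(x)=\nabla h(x)$ for some function $h$. Then the lineage motion, i.e. the diffusion $Y$ with generator $\mathcal Lf=r\gamma(\sigma^2\Delta f+(2\sigma^2\nabla\log(\gamma\varphi)-\vec b)\cdot\nabla f)$, is reversible with respect to $\pi(x)=\frac{\gamma}{r}\varphi(x)^2e^{-h(x)/\sigma^2}$.
   Context: Setting: $\vec b:\mathbb R^d\to\mathbb R^d$; $\mathcal Bf=\sigma^2\Delta f+\vec b\cdot\nabla f$, $\mathcal B^*f=\sigma^2\Delta f-\nabla\cdot(\vec bf)$. Birth rate $\gamma(x)=\gamma(x,\rho_\gamma*\varphi(x))$ and establishment probability $r(x)=r(x,\rho_r*\varphi(x))$, net growth $F(x,\rho_F*\varphi(x))$, with smooth nonnegative integrable kernels; $\varphi$ is a stationary weak solution of $\partial_t\varphi=r\mathcal B^*(\gamma\varphi)+\varphi F$, arising as the deterministic scaling limit of the population model with Gaussian offspring dispersal of mean $x+\vec b(x)/\theta$ and covariance $\sigma^2I/\theta$. The ancestral lineage of a sampled individual (its ancestor's location traced back in time, defined via the lookdown/line-of-descent representation of the limit) is a time-homogeneous diffusion with the stated generator $\mathcal L$. Reversibility w.r.t. $\pi$ means $\int\pi f\mathcal Lg\,dx=\int\pi g\mathcal Lf\,dx$ for smooth compactly supported $f,g$. *)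

theory Defs
  imports "HOL-Analysis.Analysis"
begin

text \<open>Functions on R^d are modelled as functions on real^'d (d = CARD('d)).\<close>

definition pd :: "'d::finite \<Rightarrow> (real^'d \<Rightarrow> real) \<Rightarrow> real^'d \<Rightarrow> real" where
  "pd i f x = deriv (\<lambda>t. f (x + t *\<^sub>R axis i 1)) 0"

definition grad :: "(real^'d::finite \<Rightarrow> real) \<Rightarrow> real^'d \<Rightarrow> real^'d" where
  "grad f x = (\<chi> i. pd i f x)"

definition lap :: "(real^'d::finite \<Rightarrow> real) \<Rightarrow> real^'d \<Rightarrow> real" where
  "lap f x = (\<Sum>i\<in>UNIV. pd i (pd i f) x)"

fun Ck :: "nat \<Rightarrow> (real^'d::finite \<Rightarrow> real) \<Rightarrow> bool" where
  "Ck 0 f = continuous_on UNIV f"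
| "Ck (Suc k) f = ((\<forall>x. f differentiable (at x)) \<and> (\<forall>i. Ck k (pd i f)))"

definition smooth :: "(real^'d::finite \<Rightarrow> real) \<Rightarrow> bool" where
  "smooth f \<longleftrightarrow> (\<forall>k. Ck k f)"

definition test_fun :: "(real^'d::finite \<Rightarrow> real) \<Rightarrow> bool" where
  "test_fun f \<longleftrightarrow> smooth f \<and> compact (closure {x. f x \<noteq> 0})"

definition conv :: "(real^'d::finite \<Rightarrow> real) \<Rightarrow> (real^'d \<Rightarrow> real) \<Rightarrow> real^'d \<Rightarrow> real" where
  "conv \<rho> \<phi> x = (LINT y|lborel. \<rho> (x - y) * \<phi> y)"

definition Bop :: "real \<Rightarrow> (real^'d::finite \<Rightarrow> real^'d) \<Rightarrow> (real^'d \<Rightarrow> real) \<Rightarrow> real^'d \<Rightarrow> real" where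
  "Bop \<sigma> b f x = \<sigma>\<^sup>2 * lap f x + b x \<bullet> grad f x"

text \<open>phi is a stationary weak solution of  d/dt phi = r B^*(gamma phi) + phi F:
  for every test function f, \<integral> gamma phi B(r f) + f phi F dx = 0.\<close>
definition stationary_weak ::
  "real \<Rightarrow> (real^'d::finite \<Rightarrow> real^'d) \<Rightarrow> (real^'d \<Rightarrow> real) \<Rightarrow> (real^'d \<Rightarrow> real)
     \<Rightarrow> (real^'d \<Rightarrow> real) \<Rightarrow> (real^'d \<Rightarrow> real) \<Rightarrow> bool" where
  "stationary_weak \<sigma> b \<gamma> r F \<phi> \<longleftrightarrow>
     (\<forall>f. test_fun f \<longrightarrow>
        (LINT x|lborel. \<gamma> x * \<phi> x * Bop \<sigma> b (\<lambda>y. r y * f y) x + f x * \<phi> x * F x) = 0)"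

definition Lgen ::
  "real \<Rightarrow> (real^'d::finite \<Rightarrow> real^'d) \<Rightarrow> (real^'d \<Rightarrow> real) \<Rightarrow> (real^'d \<Rightarrow> real)
     \<Rightarrow> (real^'d \<Rightarrow> real) \<Rightarrow> (real^'d \<Rightarrow> real) \<Rightarrow> real^'d \<Rightarrow> real" where
  "Lgen \<sigma> b \<gamma> r \<phi> f x = r x * \<gamma> x *
     (\<sigma>\<^sup>2 * lap f x + ((2 * \<sigma>\<^sup>2) *\<^sub>R grad (\<lambda>y. ln (\<gamma> y * \<phi> y)) x - b x) \<bullet> grad f x)"

definition reversible_wrt :: "((real^'d::finite \<Rightarrow> real) \<Rightarrow> real^'d \<Rightarrow> real) \<Rightarrow> (real^'d \<Rightarrow> real) \<Rightarrow> bool" where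
  "reversible_wrt L \<pi> \<longleftrightarrow>
     (\<forall>f g. test_fun f \<longrightarrow> test_fun g \<longrightarrow>
        (LINT x|lborel. \<pi> x * f x * L g x) = (LINT x|lborel. \<pi> x * g x * L f x))"

end

theory Submission
  imports Defs
begin


lemma pd_hasd:
  fixes V :: "real^'d::finite \<Rightarrow> real"
  assumes "(V has_derivative V') (at (x + s *\<^sub>R axis i 1))"
  shows "((\<lambda>s. V (x + s *\<^sub>R axis i 1)) has_real_derivative V' (axis i 1)) (at s)"
proof -
  have l: "linear V'" using assms has_derivative_linear by blast
  have "((\<lambda>s. x + s *\<^sub>R axis i 1) has_derivative (\<lambda>u. u *\<^sub>R axis i 1)) (at s)"
    by (auto intro!: derivative_eq_intros)
  from has_derivative_compose[OF this assms]
  have "((\<lambda>s. V (x + s *\<^sub>R axis i 1)) has_derivative (\<lambda>u. V' (u *\<^sub>R axis i 1))) (at s)" .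
  moreover have "(\<lambda>u. V' (u *\<^sub>R axis i 1)) = (*) (V' (axis i 1))"
    using linear_scale[OF l] by (auto simp: mult.commute)
  ultimately show ?thesis
    by (simp add: has_field_derivative_def)
qed

lemma pd_eq_fderiv:
  fixes V :: "real^'d::finite \<Rightarrow> real"
  assumes "(V has_derivative V') (at x)"
  shows "pd i V x = V' (axis i 1)"
proof -
  have "((\<lambda>s. V (x + s *\<^sub>R axis i 1)) has_real_derivative V' (axis i 1)) (at 0)"
    by (rule pd_hasd) (use assms in simp)
  then show ?thesis unfolding pd_def by (rule DERIV_imp_deriv)
qed

lemma pd_has_at:
  fixes V :: "real^'d::finite \<Rightarrow> real"
  assumes "V differentiable (at (x + s *\<^sub>R axis i 1))"
  shows "((\<lambda>s. V (x + s *\<^sub>R axis i 1)) has_real_derivative pd i V (x + s *\<^sub>R axis i 1)) (at s)"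
proof -
  obtain V' where d: "(V has_derivative V') (at (x + s *\<^sub>R axis i 1))"
    using assms differentiable_def by blast
  show ?thesis using pd_hasd[OF d] pd_eq_fderiv[OF d] by simp
qed

lemma pd_has:
  fixes V :: "real^'d::finite \<Rightarrow> real"
  assumes "V differentiable (at x)"
  shows "((\<lambda>s. V (x + s *\<^sub>R axis i 1)) has_real_derivative pd i V x) (at 0)"
  using pd_has_at[of V x 0 i] assms by simp

lemma pd_from:
  fixes V :: "real^'d::finite \<Rightarrow> real"
  assumes "((\<lambda>s. V (x + s *\<^sub>R axis i 1)) has_real_derivative D) (at 0)"
  shows "pd i V x = D"
  unfolding pd_def using assms by (rule DERIV_imp_deriv)

lemma pd_mult:
  fixes f g :: "real^'d::finite \<Rightarrow> real"
  assumes "f differentiable (at x)" "g differentiable (at x)"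
  shows "pd i (\<lambda>y. f y * g y) x = f x * pd i g x + pd i f x * g x"
  apply (rule pd_from)
  using DERIV_mult[OF pd_has[OF assms(1), of i] pd_has[OF assms(2), of i]]
  by (simp add: algebra_simps)

lemma pd_add:
  fixes f g :: "real^'d::finite \<Rightarrow> real"
  assumes "f differentiable (at x)" "g differentiable (at x)"
  shows "pd i (\<lambda>y. f y + g y) x = pd i f x + pd i g x"
  apply (rule pd_from)
  using DERIV_add[OF pd_has[OF assms(1), of i] pd_has[OF assms(2), of i]]
  by (simp add: algebra_simps)

lemma pd_diff:
  fixes f g :: "real^'d::finite \<Rightarrow> real"
  assumes "f differentiable (at x)" "g differentiable (at x)"
  shows "pd i (\<lambda>y. f y - g y) x = pd i f x - pd i g x"
  apply (rule pd_from)
  using DERIV_diff[OF pd_has[OF assms(1), of i] pd_has[OF assms(2), of i]]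
  by (simp add: algebra_simps)

lemma pd_cmult:
  fixes f :: "real^'d::finite \<Rightarrow> real"
  assumes "f differentiable (at x)"
  shows "pd i (\<lambda>y. c * f y) x = c * pd i f x"
  apply (rule pd_from)
  using DERIV_cmult[OF pd_has[OF assms(1), of i], of c]
  by (simp add: algebra_simps)

lemma pd_exp:
  fixes f :: "real^'d::finite \<Rightarrow> real"
  assumes "f differentiable (at x)"
  shows "pd i (\<lambda>y. exp (f y)) x = exp (f x) * pd i f x"
  apply (rule pd_from)
  using DERIV_chain2[OF DERIV_exp pd_has[OF assms(1), of i]]
  by (simp add: algebra_simps)

lemma pd_ln:
  fixes f :: "real^'d::finite \<Rightarrow> real"
  assumes "f differentiable (at x)" "f x > 0"
  shows "pd i (\<lambda>y. ln (f y)) x = pd i f x / f x"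
  apply (rule pd_from)
  using DERIV_chain2[OF DERIV_ln pd_has[OF assms(1), of i]] assms(2)
  by (simp add: field_simps)


lemma exp_differentiable: "exp differentiable (at (x::real))"
  using DERIV_exp[of x] unfolding has_field_derivative_def differentiable_def by blast

lemma ln_differentiable: "(x::real) > 0 \<Longrightarrow> ln differentiable (at x)"
  using DERIV_ln[of x] unfolding has_field_derivative_def differentiable_def by blast

definition C1 :: "(real^'d::finite \<Rightarrow> real) \<Rightarrow> bool" where
  "C1 f \<longleftrightarrow> (\<forall>x. f differentiable (at x)) \<and> (\<forall>i. continuous_on UNIV (pd i f))"

lemma C1_diffD: "C1 f \<Longrightarrow> f differentiable (at x)"
  unfolding C1_def by blast

lemma C1_pdD: "C1 f \<Longrightarrow> continuous_on UNIV (pd i f)"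
  unfolding C1_def by blast

lemma C1_cont: "C1 f \<Longrightarrow> continuous_on UNIV f"
  by (meson C1_diffD continuous_at_imp_continuous_on differentiable_imp_continuous_within)

lemma C1_mult:
  assumes "C1 f" "C1 g" shows "C1 (\<lambda>y. f y * g y)"
proof -
  have "pd i (\<lambda>y. f y * g y) = (\<lambda>x. f x * pd i g x + pd i f x * g x)" for i
    using pd_mult[OF C1_diffD[OF assms(1)] C1_diffD[OF assms(2)]] by blast
  then show ?thesis unfolding C1_def
    using C1_diffD[OF assms(1)] C1_diffD[OF assms(2)] C1_cont[OF assms(1)] C1_cont[OF assms(2)]
      C1_pdD[OF assms(1)] C1_pdD[OF assms(2)]
    by (auto intro!: differentiable_mult continuous_intros)
qed

lemma C1_add:
  assumes "C1 f" "C1 g" shows "C1 (\<lambda>y. f y + g y)"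
proof -
  have "pd i (\<lambda>y. f y + g y) = (\<lambda>x. pd i f x + pd i g x)" for i
    using pd_add[OF C1_diffD[OF assms(1)] C1_diffD[OF assms(2)]] by blast
  then show ?thesis unfolding C1_def
    using C1_diffD[OF assms(1)] C1_diffD[OF assms(2)]
      C1_pdD[OF assms(1)] C1_pdD[OF assms(2)]
    by (auto intro!: differentiable_add continuous_intros)
qed

lemma C1_diff:
  assumes "C1 f" "C1 g" shows "C1 (\<lambda>y. f y - g y)"
proof -
  have "pd i (\<lambda>y. f y - g y) = (\<lambda>x. pd i f x - pd i g x)" for i
    using pd_diff[OF C1_diffD[OF assms(1)] C1_diffD[OF assms(2)]] by blast
  then show ?thesis unfolding C1_def
    using C1_diffD[OF assms(1)] C1_diffD[OF assms(2)]
      C1_pdD[OF assms(1)] C1_pdD[OF assms(2)]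
    by (auto intro!: differentiable_diff continuous_intros)
qed

lemma C1_cmult:
  assumes "C1 f" shows "C1 (\<lambda>y. c * f y)"
proof -
  have "pd i (\<lambda>y. c * f y) = (\<lambda>x. c * pd i f x)" for i
    using pd_cmult[OF C1_diffD[OF assms(1)]] by blast
  then show ?thesis unfolding C1_def
    using C1_diffD[OF assms(1)] C1_pdD[OF assms(1)]
    by (auto intro!: differentiable_mult continuous_intros)
qed

lemma C1_exp:
  assumes "C1 f" shows "C1 (\<lambda>y. exp (f y))"
proof -
  have "pd i (\<lambda>y. exp (f y)) = (\<lambda>x. exp (f x) * pd i f x)" for i
    using pd_exp[OF C1_diffD[OF assms(1)]] by blast
  then show ?thesis unfolding C1_def
    using C1_diffD[OF assms(1)] C1_pdD[OF assms(1)] C1_cont[OF assms(1)]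
    by (auto intro!: differentiable_compose[of exp] exp_differentiable continuous_intros)
qed

lemma C1_ln:
  assumes "C1 f" "\<And>x. f x > 0" shows "C1 (\<lambda>y. ln (f y))"
proof -
  have "pd i (\<lambda>y. ln (f y)) = (\<lambda>x. pd i f x / f x)" for i
    using pd_ln[OF C1_diffD[OF assms(1)] assms(2)] by blast
  then show ?thesis unfolding C1_def
    using C1_diffD[OF assms(1)] C1_pdD[OF assms(1)] C1_cont[OF assms(1)] assms(2)
    by (auto intro!: differentiable_compose[of ln] ln_differentiable continuous_intros
        simp: less_imp_neq[symmetric])
qed

lemma smooth_C1: "smooth f \<Longrightarrow> C1 f"
  unfolding smooth_def C1_def using Ck.simps(1) Ck.simps(2)[of 0 f] by auto

lemma smooth_pd_C1: "smooth f \<Longrightarrow> C1 (pd i f)"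
  unfolding smooth_def C1_def using Ck.simps(1) Ck.simps(2)[of 1 f] Ck.simps(2)[of 0 "pd i f"] by auto


lemma integral_pd_zero:
  fixes V :: "real^'d::finite \<Rightarrow> real"
  assumes C: "C1 V" and K: "compact K" and supp: "\<And>x. x \<notin> K \<Longrightarrow> V x = 0"
  shows "integrable lborel (pd i V) \<and> (LINT x|lborel. pd i V x) = 0"
proof -
  define e where "e = (axis i 1 :: real^'d)"
  have ne: "norm e = 1" by (simp add: e_def)
  obtain R where R: "\<And>x. x \<in> K \<Longrightarrow> norm x \<le> R" using compact_imp_bounded[OF K] unfolding bounded_pos by auto
  have V0: "V x = 0" if "norm x > R" for x
  proof -
    have "x \<notin> K" using R[of x] that by force
    then show ?thesis by (rule supp)
  qed
  have contV: "continuous_on UNIV V" by (rule C1_cont[OF C])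
  have contP: "continuous_on UNIV (pd i V)" by (rule C1_pdD[OF C])
  have "compact (pd i V ` cball 0 (R+2))"
    by (rule compact_continuous_image[OF continuous_on_subset[OF contP]]) auto
  then obtain M where M: "\<And>y. y \<in> cball 0 (R+2) \<Longrightarrow> \<bar>pd i V y\<bar> \<le> M"
    using compact_imp_bounded bounded_iff by (metis image_eqI real_norm_def)
  have measV: "V \<in> borel_measurable borel" by (rule borel_measurable_continuous_onI[OF contV])
  have "integrable lborel (\<lambda>x. indicator (cball 0 R) x *\<^sub>R V x)"
    by (rule borel_integrable_compact) (auto intro: continuous_on_subset[OF contV])
  moreover have "(\<lambda>x. indicator (cball 0 R) x *\<^sub>R V x) = V"
    using V0 by (auto simp: indicator_def fun_eq_iff)
  ultimately have intV: "integrable lborel V" by simp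
  have shift: "(LINT x|lborel. V (x + c)) = (LINT x|lborel. V x)" for c
  proof -
    have "(LINT x|lborel. V x) = integral\<^sup>L (distr lborel borel ((+) c)) V" by (simp add: lborel_distr_plus)
    also have "\<dots> = (LINT x|lborel. V (c + x))" by (rule integral_distr) (auto simp: measV)
    finally show ?thesis by (simp add: add.commute)
  qed
  have intVs: "integrable lborel (\<lambda>x. V (x + c))" for c
  proof -
    have "integrable (distr lborel borel ((+) c)) V" using intV by (simp add: lborel_distr_plus)
    then have "integrable lborel (\<lambda>x. V (c + x))" by (subst (asm) integrable_distr_eq) (auto simp: measV)
    then show ?thesis by (simp add: add.commute)
  qed
  define t where "t n = inverse (real (Suc n))" for n
  have tpos: "t n > 0" "t n \<le> 1" for n by (auto simp: t_def field_simps)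
  define D where "D n x = (V (x + t n *\<^sub>R e) - V x) / t n" for n x
  have intD0: "integral\<^sup>L lborel (D n) = 0" for n
    unfolding D_def
    by (simp add: Bochner_Integration.integral_diff[OF intVs intV] shift)
  have h1: "pd i V \<in> borel_measurable lborel"
      using borel_measurable_continuous_onI[OF contP] by simp
  have h2: "D n \<in> borel_measurable lborel" for n
      unfolding D_def using measV by measurable
  have h3: "integrable lborel (\<lambda>x. M * indicator (cball 0 (R+1)) x)"
  proof -
    have "integrable lborel (\<lambda>x. indicator (cball 0 (R+1)) x *\<^sub>R M)"
      by (rule borel_integrable_compact) auto
    then show ?thesis by (simp add: mult.commute)
  qed
    have tl: "filterlim t (at 0) sequentially"
    proof -
      have "t = (\<lambda>n. inverse (real (Suc n)))" by (simp add: fun_eq_iff t_def)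
      then have "t \<longlonglongrightarrow> 0" using LIMSEQ_inverse_real_of_nat by simp
      then show ?thesis unfolding filterlim_at using tpos by (auto simp: less_imp_neq[symmetric])
    qed
  have h4: "AE x in lborel. (\<lambda>n. D n x) \<longlonglongrightarrow> pd i V x"
    proof (rule AE_I2)
      fix x
      have "((\<lambda>s. V (x + s *\<^sub>R e)) has_real_derivative pd i V x) (at 0)"
        unfolding e_def by (rule pd_has[OF C1_diffD[OF C]])
      then have "((\<lambda>s. (V (x + s *\<^sub>R e) - V x) / s) \<longlongrightarrow> pd i V x) (at 0)"
        by (simp add: has_field_derivative_iff)
      from filterlim_compose[OF this tl] show "(\<lambda>n. D n x) \<longlonglongrightarrow> pd i V x"
        by (simp add: D_def)
    qed
  have h5: "AE x in lborel. norm (D n x) \<le> M * indicator (cball 0 (R+1)) x" for n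
    proof (rule AE_I2)
      fix x
      show "norm (D n x) \<le> M * indicator (cball 0 (R+1)) x"
      proof (cases "norm x > R + 1")
        case True
        have "norm (x + t n *\<^sub>R e) \<ge> norm x - t n"
          using norm_triangle_ineq2[of x "- (t n *\<^sub>R e)"] tpos[of n] ne by simp
        then have "norm (x + t n *\<^sub>R e) > R" using True tpos[of n] by linarith
        then show ?thesis using True V0[of x] V0[of "x + t n *\<^sub>R e"] by (simp add: D_def)
      next
        case False
        have "\<exists>z>0. z < t n \<and> V (x + t n *\<^sub>R e) - V (x + 0 *\<^sub>R e) = (t n - 0) * pd i V (x + z *\<^sub>R e)"
          apply (rule MVT2[where f = "\<lambda>s. V (x + s *\<^sub>R e)"])
          using tpos[of n] apply simp
          unfolding e_def by (rule pd_has_at[OF C1_diffD[OF C]])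
        then obtain z where z: "z > 0" "z < t n"
          and eq: "V (x + t n *\<^sub>R e) - V x = t n * pd i V (x + z *\<^sub>R e)" by auto
        have "D n x = pd i V (x + z *\<^sub>R e)" using eq tpos[of n] by (simp add: D_def)
        moreover have "norm (x + z *\<^sub>R e) \<le> R + 2"
          using norm_triangle_ineq[of x "z *\<^sub>R e"] z tpos[of n] ne False by simp
        ultimately show ?thesis using M[of "x + z *\<^sub>R e"] False by (simp add: indicator_def)
      qed
    qed
  have "(\<lambda>n. integral\<^sup>L lborel (D n)) \<longlonglongrightarrow> integral\<^sup>L lborel (pd i V)"
    by (rule integral_dominated_convergence[OF h1 h2 h3 h4 h5])
  then have "(\<lambda>n. 0) \<longlonglongrightarrow> integral\<^sup>L lborel (pd i V)" using intD0 by simp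
  then have "integral\<^sup>L lborel (pd i V) = 0" using LIMSEQ_unique[OF _ tendsto_const] by metis
  moreover have "integrable lborel (pd i V)"
    by (rule integrable_dominated_convergence[OF h1 h2 h3 h4 h5])
  ultimately show ?thesis by simp
qed


lemma integrable_cont_supp:
  fixes A :: "real^'d::finite \<Rightarrow> real"
  assumes "continuous_on UNIV A" "compact K" "\<And>x. x \<notin> K \<Longrightarrow> A x = 0"
  shows "integrable lborel A"
proof -
  have "integrable lborel (\<lambda>x. indicator K x *\<^sub>R A x)"
    by (rule borel_integrable_compact[OF assms(2) continuous_on_subset[OF assms(1)]]) auto
  moreover have "(\<lambda>x. indicator K x *\<^sub>R A x) = A"
    using assms(3) by (auto simp: indicator_def fun_eq_iff)
  ultimately show ?thesis by simp
qed



theorem mainTheorem11: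
  fixes \<sigma> :: real
    and h :: "real^'d::finite \<Rightarrow> real"
    and b :: "real^'d \<Rightarrow> real^'d"
    and \<phi> :: "real^'d \<Rightarrow> real"
    and \<gamma>0 r0 F0 :: "real^'d \<Rightarrow> real \<Rightarrow> real"
    and \<rho>\<gamma> \<rho>r \<rho>F :: "real^'d \<Rightarrow> real"
  defines "\<gamma> \<equiv> \<lambda>x. \<gamma>0 x (conv \<rho>\<gamma> \<phi> x)"
      and "r \<equiv> \<lambda>x. r0 x (conv \<rho>r \<phi> x)"
      and "F \<equiv> \<lambda>x. F0 x (conv \<rho>F \<phi> x)"
  assumes sigma_pos: "\<sigma> > 0"
    and kernels: "\<forall>\<rho>\<in>{\<rho>\<gamma>, \<rho>r, \<rho>F}. smooth \<rho> \<and> (\<forall>x. \<rho> x \<ge> 0) \<and> integrable lborel \<rho>"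
    and smooth_h: "smooth h"
    and drift: "\<And>x. b x = grad h x"
    and smooth_phi: "smooth \<phi>" and phi_pos: "\<And>x. \<phi> x > 0"
    and smooth_gamma: "smooth \<gamma>" and gamma_pos: "\<And>x. \<gamma> x > 0"
    and smooth_r: "smooth r" and r_pos: "\<And>x. r x > 0"
    and stationary: "stationary_weak \<sigma> b \<gamma> r F \<phi>"
  shows "reversible_wrt (Lgen \<sigma> b \<gamma> r \<phi>)
           (\<lambda>x. \<gamma> x / r x * (\<phi> x)\<^sup>2 * exp (- h x / \<sigma>\<^sup>2))"
proof -
  have s2: "\<sigma>\<^sup>2 > 0" using sigma_pos by simp
  define Lgp where "Lgp = (\<lambda>y. ln (\<gamma> y * \<phi> y))"
  define u where "u = (\<lambda>y. 2 * Lgp y - inverse (\<sigma>\<^sup>2) * h y)"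
  define w where "w = (\<lambda>y. exp (u y))"
  have Cg: "C1 \<gamma>" by (rule smooth_C1[OF smooth_gamma])
  have Cp: "C1 \<phi>" by (rule smooth_C1[OF smooth_phi])
  have Ch: "C1 h" by (rule smooth_C1[OF smooth_h])
  have Cr: "C1 r" by (rule smooth_C1[OF smooth_r])
  have pos: "\<And>y. \<gamma> y * \<phi> y > 0" using gamma_pos phi_pos by simp
  have CL: "C1 Lgp" unfolding Lgp_def by (rule C1_ln[OF C1_mult[OF Cg Cp] pos])
  have Cu: "C1 u" unfolding u_def by (intro C1_diff C1_cmult CL Ch)
  have Cw: "C1 w" unfolding w_def by (rule C1_exp[OF Cu])
  have wpi: "\<gamma> y / r y * (\<phi> y)\<^sup>2 * exp (- h y / \<sigma>\<^sup>2) * (r y * \<gamma> y) = w y" for y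
  proof -
    have "u y = 2 * Lgp y + (- h y / \<sigma>\<^sup>2)" unfolding u_def by (simp add: field_simps)
    then have "w y = exp (2 * Lgp y) * exp (- h y / \<sigma>\<^sup>2)" unfolding w_def using exp_add[of "2 * Lgp y" "- h y / \<sigma>\<^sup>2"] by simp
    also have "exp (2 * Lgp y) = (\<gamma> y * \<phi> y)\<^sup>2"
      using exp_of_nat_mult[of 2 "Lgp y"] pos[of y] by (simp add: Lgp_def)
    finally show ?thesis using r_pos[of y] by (simp add: field_simps power2_eq_square)
  qed
  have Lexp: "Lgen \<sigma> b \<gamma> r \<phi> g x = r x * \<gamma> x * (\<sigma>\<^sup>2 * (\<Sum>i\<in>UNIV. pd i (pd i g) x)
      + (\<Sum>i\<in>UNIV. (2 * \<sigma>\<^sup>2 * pd i Lgp x - pd i h x) * pd i g x))" for g x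
    unfolding Lgen_def lap_def grad_def inner_vec_def drift Lgp_def by (simp add: algebra_simps)
  have pw: "pd i w x = w x * pd i u x" for i x
    unfolding w_def by (rule pd_exp[OF C1_diffD[OF Cu]])
  have pu: "pd i u x = 2 * pd i Lgp x - inverse (\<sigma>\<^sup>2) * pd i h x" for i x
    unfolding u_def
    using pd_diff[OF C1_diffD[OF C1_cmult[OF CL]] C1_diffD[OF C1_cmult[OF Ch]]]
      pd_cmult[OF C1_diffD[OF CL]] pd_cmult[OF C1_diffD[OF Ch]] by simp
  show ?thesis unfolding reversible_wrt_def
  proof (intro allI impI)
    fix f g :: "real^'d \<Rightarrow> real"
    assume tf: "test_fun f" and tg: "test_fun g"
    define \<pi> where "\<pi> = (\<lambda>x. \<gamma> x / r x * (\<phi> x)\<^sup>2 * exp (- h x / \<sigma>\<^sup>2))"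
    have Cf: "C1 f" and Cgg: "C1 g" using tf tg smooth_C1 by (auto simp: test_fun_def)
    have Cfi: "C1 (pd i f)" and Cgi: "C1 (pd i g)" for i
      using tf tg smooth_pd_C1 by (auto simp: test_fun_def)
    define K where "K = closure {x. f x \<noteq> 0} \<union> closure {x. g x \<noteq> 0}"
    have K: "compact K" using tf tg by (auto simp: test_fun_def K_def intro: compact_Un)
    have f0: "f x = 0" and g0: "g x = 0" if "x \<notin> K" for x
      using that closure_subset[of "{x. f x \<noteq> 0}"] closure_subset[of "{x. g x \<noteq> 0}"]
      by (auto simp: K_def)
    define V where "V i = (\<lambda>y. w y * (f y * pd i g y - g y * pd i f y))" for i
    have CV: "C1 (V i)" for i unfolding V_def by (intro C1_mult C1_diff Cw Cf Cgg Cfi Cgi)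
    have V0: "V i x = 0" if "x \<notin> K" for i x using f0[OF that] g0[OF that] by (simp add: V_def)
    have IV: "integrable lborel (pd i (V i)) \<and> (LINT x|lborel. pd i (V i) x) = 0" for i
      by (rule integral_pd_zero[OF CV K V0])
    have pdV: "pd i (V i) x = w x * (f x * pd i (pd i g) x - g x * pd i (pd i f) x)
        + w x * (2 * pd i Lgp x - inverse (\<sigma>\<^sup>2) * pd i h x) * (f x * pd i g x - g x * pd i f x)" for i x
    proof -
      have d: "(\<lambda>y. f y * pd i g y - g y * pd i f y) differentiable (at x)"
        by (intro C1_diffD[OF C1_diff] C1_mult Cf Cgg Cfi Cgi)
      have "pd i (V i) x = w x * pd i (\<lambda>y. f y * pd i g y - g y * pd i f y) x
          + pd i w x * (f x * pd i g x - g x * pd i f x)"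
        unfolding V_def by (rule pd_mult[OF C1_diffD[OF Cw] d])
      also have "pd i (\<lambda>y. f y * pd i g y - g y * pd i f y) x
          = (f x * pd i (pd i g) x + pd i f x * pd i g x) - (g x * pd i (pd i f) x + pd i g x * pd i f x)"
        using pd_diff[OF C1_diffD[OF C1_mult[OF Cf Cgi]] C1_diffD[OF C1_mult[OF Cgg Cfi]]]
          pd_mult[OF C1_diffD[OF Cf] C1_diffD[OF Cgi]] pd_mult[OF C1_diffD[OF Cgg] C1_diffD[OF Cfi]]
        by simp
      finally show ?thesis by (simp add: pw pu algebra_simps)
    qed
    have pt: "\<pi> x * f x * Lgen \<sigma> b \<gamma> r \<phi> g x - \<pi> x * g x * Lgen \<sigma> b \<gamma> r \<phi> f x
        = (\<Sum>i\<in>UNIV. \<sigma>\<^sup>2 * pd i (V i) x)" for x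
    proof -
      have W: "\<pi> x * (r x * \<gamma> x) = w x" using wpi[of x] by (simp add: \<pi>_def)
      have "\<pi> x * f x * Lgen \<sigma> b \<gamma> r \<phi> g x - \<pi> x * g x * Lgen \<sigma> b \<gamma> r \<phi> f x
        = w x * (f x * (\<sigma>\<^sup>2 * (\<Sum>i\<in>UNIV. pd i (pd i g) x)
      + (\<Sum>i\<in>UNIV. (2 * \<sigma>\<^sup>2 * pd i Lgp x - pd i h x) * pd i g x)) -
          g x * (\<sigma>\<^sup>2 * (\<Sum>i\<in>UNIV. pd i (pd i f) x)
      + (\<Sum>i\<in>UNIV. (2 * \<sigma>\<^sup>2 * pd i Lgp x - pd i h x) * pd i f x)))"
        unfolding Lexp W[symmetric] by (simp add: algebra_simps)
      also have "\<dots> = (\<Sum>i\<in>UNIV. w x * (f x * (\<sigma>\<^sup>2 * pd i (pd i g) x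
          + (2 * \<sigma>\<^sup>2 * pd i Lgp x - pd i h x) * pd i g x) -
          g x * (\<sigma>\<^sup>2 * pd i (pd i f) x + (2 * \<sigma>\<^sup>2 * pd i Lgp x - pd i h x) * pd i f x)))"
        by (simp add: sum_distrib_left sum.distrib sum_subtractf algebra_simps)
      also have "\<dots> = (\<Sum>i\<in>UNIV. \<sigma>\<^sup>2 * pd i (V i) x)"
        by (rule sum.cong) (use s2 in \<open>auto simp: pdV field_simps\<close>)
      finally show ?thesis .
    qed
    have intA: "integrable lborel (\<lambda>x. \<pi> x * f' x * Lgen \<sigma> b \<gamma> r \<phi> g' x)"
      if C1f': "C1 f'" and C1g': "C1 g'" and C1gi': "\<And>i. C1 (pd i g')" and z: "\<And>x. x \<notin> K \<Longrightarrow> f' x = 0"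
      for f' g' :: "real^'d \<Rightarrow> real"
    proof (rule integrable_cont_supp[OF _ K])
      show "\<pi> x * f' x * Lgen \<sigma> b \<gamma> r \<phi> g' x = 0" if "x \<notin> K" for x using z[OF that] by simp
      have sne: "\<forall>x\<in>(UNIV::(real^'d) set). \<sigma>\<^sup>2 \<noteq> 0" using s2 by simp
      have rne: "\<forall>x\<in>UNIV. r x \<noteq> 0" using r_pos by (simp add: less_imp_neq[symmetric])
      have "continuous_on UNIV (\<lambda>x. \<pi> x * f' x * (r x * \<gamma> x * (\<sigma>\<^sup>2 * (\<Sum>i\<in>UNIV. pd i (pd i g') x)
         + (\<Sum>i\<in>UNIV. (2 * \<sigma>\<^sup>2 * pd i Lgp x - pd i h x) * pd i g' x))))"
        unfolding \<pi>_def
        using C1_cont[OF Cg] C1_cont[OF Cr] C1_cont[OF Cp] C1_cont[OF Ch] C1_cont[OF C1f']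
          C1_pdD[OF C1gi'] C1_pdD[OF CL] C1_pdD[OF Ch] C1_pdD[OF C1g'] rne sne
        by (intro continuous_intros; assumption?)
      then show "continuous_on UNIV (\<lambda>x. \<pi> x * f' x * Lgen \<sigma> b \<gamma> r \<phi> g' x)"
        by (simp add: Lexp)
    qed
    have iA: "integrable lborel (\<lambda>x. \<pi> x * f x * Lgen \<sigma> b \<gamma> r \<phi> g x)"
      by (rule intA[OF Cf Cgg Cgi f0])
    have iB: "integrable lborel (\<lambda>x. \<pi> x * g x * Lgen \<sigma> b \<gamma> r \<phi> f x)"
      by (rule intA[OF Cgg Cf Cfi g0])
    have "(LINT x|lborel. \<pi> x * f x * Lgen \<sigma> b \<gamma> r \<phi> g x) - (LINT x|lborel. \<pi> x * g x * Lgen \<sigma> b \<gamma> r \<phi> f x)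
        = (LINT x|lborel. \<pi> x * f x * Lgen \<sigma> b \<gamma> r \<phi> g x - \<pi> x * g x * Lgen \<sigma> b \<gamma> r \<phi> f x)"
      by (rule Bochner_Integration.integral_diff[OF iA iB, symmetric])
    also have "\<dots> = (LINT x|lborel. (\<Sum>i\<in>UNIV. \<sigma>\<^sup>2 * pd i (V i) x))"
      by (simp add: pt)
    also have "\<dots> = (\<Sum>i\<in>UNIV. (LINT x|lborel. \<sigma>\<^sup>2 * pd i (V i) x))"
      by (rule Bochner_Integration.integral_sum) (use IV in auto)
    also have "\<dots> = 0" using IV by simp
    finally show "(LINT x|lborel. \<gamma> x / r x * (\<phi> x)\<^sup>2 * exp (- h x / \<sigma>\<^sup>2) * f x * Lgen \<sigma> b \<gamma> r \<phi> g x)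
        = (LINT x|lborel. \<gamma> x / r x * (\<phi> x)\<^sup>2 * exp (- h x / \<sigma>\<^sup>2) * g x * Lgen \<sigma> b \<gamma> r \<phi> f x)"
      by (simp add: \<pi>_def)
  qed
qed

end
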